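(* Let $n\ge 3$. For every integer $m\ge 3$, the map $d'_m:\mathcal{C}_n\times\mathcal{C}_n\to\mathbb{R}$ is a metric on $\mathcal{C}_n$ (in particular, the quotient defining it is finite).
   Context: For $n\ge1$ let $[n]=\{1,\dots,n\}$. A contact structure of length $n$ is a simple undirected graph $\Gamma=([n],Q)$ (no self-loops, no multiple edges) such that $\{i,i+1\}\notin Q$ for every $i$; its edges are called contacts, written $i\cdot j$. $\mathcal{C}_n$ is the set of all contact structures of length $n$. $\mathbb{F}_2=\mathbb{Z}/2\mathbb{Z}$. The edge ideal $I_\Gamma$ of $\Gamma=([n],Q)$ is the ideal of $\mathbb{F}_2[x_1,\dots,x_n]$ generated by $\{x_ix_j:i\cdot j\in Q\}$. For $m\ge3$ let $R_{n,m}=\mathbb{F}_2[x_1,\dots,x_n]/\langle \text{all monomials of total degree } m\rangle$ and $\pi_m$ the quotient map; for an ideal $I$, $\pi_m(I)$ is its image, an additive subgroup of $R_{n,m}$. Define $d'_m(\Gamma_1,\Gamma_2)=\log_2\Bigl|\dfrac{\pi_m(I_{\Gamma_1})+\pi_m(I_{\Gamma_2})}{\pi_m(I_{\Gamma_1})\cap\pi_m(I_{\Gamma_2})}\Bigr|$, the base-2 logarithm of the cardinality of the quotient of additive groups. *)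

theory Defs
  imports Complex_Main "HOL-Library.Poly_Mapping" "HOL-Library.Z2"
begin

text \<open>Polynomials over F2 = bit in variables indexed by nat: maps from exponent
  vectors (monomials) to coefficients, with convolution product.\<close>
type_synonym mpoly = "(nat \<Rightarrow>\<^sub>0 nat) \<Rightarrow>\<^sub>0 bit"

text \<open>The polynomial ring F2[x_1,...,x_n] as a subset (subring) of mpoly.\<close>
definition Pn :: "nat \<Rightarrow> mpoly set" where
  "Pn n = {p. \<forall>a\<in>Poly_Mapping.keys p. Poly_Mapping.keys a \<subseteq> {1..n}}"

definition Xv :: "nat \<Rightarrow> mpoly" where
  "Xv i = Poly_Mapping.single (Poly_Mapping.single i 1) 1"

definition monom :: "(nat \<Rightarrow>\<^sub>0 nat) \<Rightarrow> mpoly" where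
  "monom a = Poly_Mapping.single a 1"

definition contact_structures :: "nat \<Rightarrow> nat set set set" where
  "contact_structures n = {Q. (\<forall>e\<in>Q. \<exists>i j. e = {i, j} \<and> i \<noteq> j \<and> i \<in> {1..n} \<and> j \<in> {1..n})
      \<and> (\<forall>i. {i, i + 1} \<notin> Q)}"

text \<open>Edge ideal: ideal of F2[x_1..x_n] generated by x_i x_j for contacts {i,j}
  (Q is finite, so the ideal consists of the P_n-linear combinations of the generators).\<close>
definition edge_ideal :: "nat \<Rightarrow> nat set set \<Rightarrow> mpoly set" where
  "edge_ideal n Q = {\<Sum>e\<in>Q. c e * (\<Prod>i\<in>e. Xv i) | c. \<forall>e. c e \<in> Pn n}"

definition monos_deg :: "nat \<Rightarrow> nat \<Rightarrow> (nat \<Rightarrow>\<^sub>0 nat) set" where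
  "monos_deg n m = {a. Poly_Mapping.keys a \<subseteq> {1..n} \<and> (\<Sum>i\<in>{1..n}. Poly_Mapping.lookup a i) = m}"

definition deg_ideal :: "nat \<Rightarrow> nat \<Rightarrow> mpoly set" where
  "deg_ideal n m = {\<Sum>a\<in>monos_deg n m. c a * monom a | c. \<forall>a. c a \<in> Pn n}"

text \<open>Elements of R_{n,m} are cosets p + J; pi_m is the quotient map.\<close>
definition pi_m :: "nat \<Rightarrow> nat \<Rightarrow> mpoly \<Rightarrow> mpoly set" where
  "pi_m n m p = (\<lambda>q. p + q) ` deg_ideal n m"

definition pi_img :: "nat \<Rightarrow> nat \<Rightarrow> mpoly set \<Rightarrow> mpoly set set" where
  "pi_img n m I = pi_m n m ` I"

definition radd :: "mpoly set \<Rightarrow> mpoly set \<Rightarrow> mpoly set" where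
  "radd a b = {x + y | x y. x \<in> a \<and> y \<in> b}"

definition subgroup_sum :: "mpoly set set \<Rightarrow> mpoly set set \<Rightarrow> mpoly set set" where
  "subgroup_sum A B = {radd a b | a b. a \<in> A \<and> b \<in> B}"

definition quot_group :: "mpoly set set \<Rightarrow> mpoly set set \<Rightarrow> mpoly set set set" where
  "quot_group G H = {(\<lambda>h. radd g h) ` H | g. g \<in> G}"

definition dquot :: "nat \<Rightarrow> nat \<Rightarrow> nat set set \<Rightarrow> nat set set \<Rightarrow> mpoly set set set" where
  "dquot n m Q1 Q2 =
     quot_group (subgroup_sum (pi_img n m (edge_ideal n Q1)) (pi_img n m (edge_ideal n Q2)))
                (pi_img n m (edge_ideal n Q1) \<inter> pi_img n m (edge_ideal n Q2))"

definition dprime :: "nat \<Rightarrow> nat \<Rightarrow> nat set set \<Rightarrow> nat set set \<Rightarrow> real" where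
  "dprime n m Q1 Q2 = log 2 (real (card (dquot n m Q1 Q2)))"

end

theory Submission
  imports Defs "HOL-Algebra.Coset"
begin

definition cosq :: "('a, 'b) monoid_scheme \<Rightarrow> 'a set \<Rightarrow> 'a set \<Rightarrow> 'a set set" where
  "cosq G K H = {(\<lambda>h. g \<otimes>\<^bsub>G\<^esub> h) ` H | g. g \<in> K}"

lemma (in comm_group) cosq_card:
  assumes fin: "finite (carrier G)" and H: "subgroup H G" and K: "subgroup K G" and HK: "H \<subseteq> K"
  shows "card (cosq G K H) * card H = card K"
proof -
  let ?K = "G\<lparr>carrier := K\<rparr>"
  have gK: "group ?K" using subgroup.subgroup_is_group[OF K] is_group by blast
  have sH: "subgroup H ?K" using subgroup_incl[OF H K HK] .
  have "card (rcosets\<^bsub>?K\<^esub> H) * card H = order ?K"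
    using group.lagrange[OF gK sH] .
  moreover have "order ?K = card K" by (simp add: order_def)
  moreover have "rcosets\<^bsub>?K\<^esub> H = cosq G K H"
  proof -
    have "H #>\<^bsub>?K\<^esub> a = (\<lambda>h. a \<otimes> h) ` H" if "a \<in> K" for a
      using that H K HK unfolding r_coset_def
      by (auto simp: m_comm subgroup.mem_carrier)
    then show ?thesis unfolding RCOSETS_def cosq_def by auto
  qed
  ultimately show ?thesis by simp
qed

lemma (in comm_group) card_set_mult:
  assumes fin: "finite (carrier G)" and X: "subgroup X G" and Y: "subgroup Y G"
  shows "card (X <#> Y) * card (X \<inter> Y) = card X * card Y"
proof -
  have Xc: "X \<subseteq> carrier G" and Yc: "Y \<subseteq> carrier G" using X Y subgroup.subset by auto
  have fX: "finite X" and fY: "finite Y" using Xc Yc fin finite_subset by auto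
  have fXY: "finite (X <#> Y)" using setmult_subset_G[OF Xc Yc] fin finite_subset by blast
  define F where "F z = {(x,y). x \<in> X \<and> y \<in> Y \<and> x \<otimes> y = z}" for z
  have U: "X \<times> Y = (\<Union>z\<in>X <#> Y. F z)"
    unfolding F_def set_mult_def by auto
  have cF: "card (F z) = card (X \<inter> Y)" if z: "z \<in> X <#> Y" for z
  proof -
    obtain x0 y0 where x0: "x0 \<in> X" and y0: "y0 \<in> Y" and zz: "z = x0 \<otimes> y0"
      using z unfolding set_mult_def by auto
    have x0c: "x0 \<in> carrier G" and y0c: "y0 \<in> carrier G" using x0 y0 Xc Yc by auto
    have "bij_betw (\<lambda>t. (x0 \<otimes> t, inv t \<otimes> y0)) (X \<inter> Y) (F z)"
    proof (rule bij_betw_byWitness[where f'="\<lambda>(x,y). inv x0 \<otimes> x"])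
      show "\<forall>a\<in>X \<inter> Y. (case (x0 \<otimes> a, inv a \<otimes> y0) of (x, y) \<Rightarrow> inv x0 \<otimes> x) = a"
        using Xc x0c by (auto simp: m_assoc[symmetric])
      show "\<forall>a'\<in>F z. (\<lambda>t. (x0 \<otimes> t, inv t \<otimes> y0)) (case a' of (x, y) \<Rightarrow> inv x0 \<otimes> x) = a'"
      proof
        fix a' assume "a' \<in> F z"
        then obtain x y where a': "a' = (x,y)" and x: "x \<in> X" and y: "y \<in> Y" and e: "x \<otimes> y = z"
          by (auto simp: F_def)
        have xc: "x \<in> carrier G" and yc: "y \<in> carrier G" using x y Xc Yc by auto
        have 1: "x0 \<otimes> (inv x0 \<otimes> x) = x" using x0c xc by (simp add: m_assoc[symmetric])
        have "inv (inv x0 \<otimes> x) \<otimes> y0 = (inv x \<otimes> x0) \<otimes> y0"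
          using x0c xc by (simp add: inv_mult_group)
        also have "\<dots> = inv x \<otimes> (x \<otimes> y)" using e zz x0c xc y0c by (simp add: m_assoc)
        also have "\<dots> = y" using xc yc by (simp add: m_assoc[symmetric])
        finally show "(\<lambda>t. (x0 \<otimes> t, inv t \<otimes> y0)) (case a' of (x, y) \<Rightarrow> inv x0 \<otimes> x) = a'"
          using 1 a' by simp
      qed
      show "(\<lambda>t. (x0 \<otimes> t, inv t \<otimes> y0)) ` (X \<inter> Y) \<subseteq> F z"
      proof (clarsimp simp: F_def)
        fix t assume tX: "t \<in> X" and tY: "t \<in> Y"
        have tc: "t \<in> carrier G" using tX Xc by auto
        show "x0 \<otimes> t \<in> X \<and> inv t \<otimes> y0 \<in> Y \<and> x0 \<otimes> t \<otimes> (inv t \<otimes> y0) = z"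
          using tX tY x0 y0 X Y tc x0c y0c zz
          by (simp add: subgroup.m_closed subgroup.m_inv_closed m_assoc[symmetric] m_assoc)
      qed
      show "(\<lambda>(x, y). inv x0 \<otimes> x) ` F z \<subseteq> X \<inter> Y"
      proof
        fix a' assume "a' \<in> (\<lambda>(x, y). inv x0 \<otimes> x) ` F z"
        then obtain x y where a': "a' = inv x0 \<otimes> x" and x: "x \<in> X" and y: "y \<in> Y" and e: "x \<otimes> y = z"
          by (auto simp: F_def)
        have xc: "x \<in> carrier G" and yc: "y \<in> carrier G" using x y Xc Yc by auto
        have eq: "inv x0 \<otimes> x = y0 \<otimes> inv y"
        proof -
          have "inv x0 \<otimes> x = inv x0 \<otimes> (x \<otimes> y) \<otimes> inv y" using xc yc x0c by (simp add: m_assoc)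
          also have "\<dots> = y0 \<otimes> inv y" using e zz x0c y0c by (simp add: m_assoc[symmetric])
          finally show ?thesis .
        qed
        have i1: "inv x0 \<otimes> x \<in> X" using x x0 X by (simp add: subgroup.m_closed subgroup.m_inv_closed)
        have i2: "y0 \<otimes> inv y \<in> Y" using y y0 Y by (simp add: subgroup.m_closed subgroup.m_inv_closed)
        show "a' \<in> X \<inter> Y" using eq i1 i2 a' by simp
      qed
    qed
    then show ?thesis by (simp add: bij_betw_same_card)
  qed
  have "card (X \<times> Y) = (\<Sum>z\<in>X <#> Y. card (F z))"
    unfolding U
  proof (rule card_UN_disjoint[OF fXY])
    show "\<forall>i\<in>X <#> Y. finite (F i)"
      using fX fY by (auto intro: finite_subset[of _ "X \<times> Y"] simp: F_def)
    show "\<forall>i\<in>X <#> Y. \<forall>j\<in>X <#> Y. i \<noteq> j \<longrightarrow> F i \<inter> F j = {}" by (auto simp: F_def)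
  qed
  also have "\<dots> = card (X <#> Y) * card (X \<inter> Y)" using cF by simp
  finally show ?thesis by (simp add: card_cartesian_product)
qed

definition cq :: "('a, 'b) monoid_scheme \<Rightarrow> 'a set \<Rightarrow> 'a set \<Rightarrow> nat" where
  "cq G X Y = card (cosq G (X <#>\<^bsub>G\<^esub> Y) (X \<inter> Y))"

lemma (in comm_group) cosq_finite:
  assumes fin: "finite (carrier G)" and K: "K \<subseteq> carrier G" and H: "H \<subseteq> carrier G"
  shows "finite (cosq G K H)"
proof -
  have "cosq G K H \<subseteq> Pow (carrier G)" unfolding cosq_def using K H by auto
  then show ?thesis using fin finite_subset by blast
qed

lemma (in comm_group) cq_facts:
  assumes fin: "finite (carrier G)" and X: "subgroup X G" and Y: "subgroup Y G"
  shows "finite (cosq G (X <#> Y) (X \<inter> Y))" and "X \<inter> Y \<in> cosq G (X <#> Y) (X \<inter> Y)"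
    and "cq G X Y * card (X \<inter> Y) * card (X \<inter> Y) = card X * card Y"
    and "cq G X Y \<ge> 1"
proof -
  have Xc: "X \<subseteq> carrier G" and Yc: "Y \<subseteq> carrier G" using X Y subgroup.subset by auto
  show f: "finite (cosq G (X <#> Y) (X \<inter> Y))"
  proof -
    have "X \<inter> Y \<subseteq> carrier G" using Xc by auto
    then show ?thesis using cosq_finite[OF fin setmult_subset_G[OF Xc Yc]] by simp
  qed
  have "\<one> \<otimes> \<one> \<in> X <#> Y" unfolding set_mult_def
    using subgroup.one_closed[OF X] subgroup.one_closed[OF Y] by blast
  then have one: "\<one> \<in> X <#> Y" by simp
  have "(\<lambda>h. \<one> \<otimes> h) ` (X \<inter> Y) = (\<lambda>h. h) ` (X \<inter> Y)"
    by (rule image_cong) (use Xc in auto)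
  then have e1: "X \<inter> Y = (\<lambda>h. \<one> \<otimes> h) ` (X \<inter> Y)" by simp
  show m: "X \<inter> Y \<in> cosq G (X <#> Y) (X \<inter> Y)" unfolding cosq_def mem_Collect_eq
    using e1 one by blast
  have "card (cosq G (X <#> Y) (X \<inter> Y)) \<noteq> 0" using f m by auto
  then show "cq G X Y \<ge> 1" unfolding cq_def by linarith
  have sI: "subgroup (X \<inter> Y) G" using X Y by (rule subgroups_Inter_pair)
  have sM: "subgroup (X <#> Y) G" using mult_subgroups[OF X Y] .
  have inc: "X \<inter> Y \<subseteq> X <#> Y"
  proof
    fix h assume "h \<in> X \<inter> Y"
    then have "h \<otimes> \<one> \<in> X <#> Y" unfolding set_mult_def using subgroup.one_closed[OF Y] by blast
    then show "h \<in> X <#> Y" using \<open>h \<in> X \<inter> Y\<close> Xc by auto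
  qed
  have A: "cq G X Y * card (X \<inter> Y) = card (X <#> Y)"
    unfolding cq_def using cosq_card[OF fin sI sM inc] .
  have "cq G X Y * card (X \<inter> Y) * card (X \<inter> Y) = card (X <#> Y) * card (X \<inter> Y)"
    unfolding A ..
  also have "\<dots> = card X * card Y" using card_set_mult[OF fin X Y] .
  finally show "cq G X Y * card (X \<inter> Y) * card (X \<inter> Y) = card X * card Y" .
qed

lemma (in comm_group) cq_one_imp:
  assumes fin: "finite (carrier G)" and X: "subgroup X G" and Y: "subgroup Y G"
    and c: "cq G X Y = 1"
  shows "X \<subseteq> Y"
proof
  fix x assume x: "x \<in> X"
  have Xc: "X \<subseteq> carrier G" using X subgroup.subset by auto
  have xc: "x \<in> carrier G" using x Xc by auto
  have "x \<otimes> \<one> \<in> X <#> Y" unfolding set_mult_def using x subgroup.one_closed[OF Y] by blast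
  then have "(\<lambda>h. x \<otimes> h) ` (X \<inter> Y) \<in> cosq G (X <#> Y) (X \<inter> Y)"
    unfolding cosq_def using xc by auto
  moreover have "X \<inter> Y \<in> cosq G (X <#> Y) (X \<inter> Y)" using cq_facts(2)[OF fin X Y] .
  moreover have "card (cosq G (X <#> Y) (X \<inter> Y)) = 1" using c unfolding cq_def .
  moreover obtain S where "cosq G (X <#> Y) (X \<inter> Y) = {S}"
    using card_1_singletonE[OF \<open>card (cosq G (X <#> Y) (X \<inter> Y)) = 1\<close>] by blast
  ultimately have "(\<lambda>h. x \<otimes> h) ` (X \<inter> Y) = X \<inter> Y"
    by simp
  moreover have "\<one> \<in> X \<inter> Y" using X Y subgroup.one_closed by auto
  then have "x \<otimes> \<one> \<in> (\<lambda>h. x \<otimes> h) ` (X \<inter> Y)"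
    by (rule imageI)
  ultimately show "x \<in> Y" using xc by auto
qed

lemma (in comm_group) cq_refl:
  assumes X: "subgroup X G"
  shows "cq G X X = 1"
proof -
  have im: "(\<lambda>h. g \<otimes> h) ` X = X" if g: "g \<in> X" for g
  proof -
    have gc: "g \<in> carrier G" using g subgroup.subset[OF X] by auto
    have "(\<lambda>h. g \<otimes> h) ` X = g <# X" unfolding l_coset_def by auto
    also have "\<dots> = X" using coset_join3[OF gc X g] .
    finally show ?thesis .
  qed
  have "cosq G (X <#> X) (X \<inter> X) = {X}"
  proof -
    have "cosq G (X <#> X) (X \<inter> X) = {(\<lambda>h. g \<otimes> h) ` X | g. g \<in> X}"
      unfolding subgroup_mult_id[OF X] cosq_def by simp
    also have "\<dots> = {X}" using im subgroup.one_closed[OF X] by auto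
    finally show ?thesis .
  qed
  then show ?thesis unfolding cq_def by simp
qed

lemma (in comm_group) cq_sym:
  assumes Xc: "X \<subseteq> carrier G" and Yc: "Y \<subseteq> carrier G"
  shows "cq G X Y = cq G Y X"
proof -
  have sub: "A <#> B \<subseteq> B <#> A" if "A \<subseteq> carrier G" "B \<subseteq> carrier G" for A B
  proof
    fix z assume "z \<in> A <#> B"
    then obtain h k where h: "h \<in> A" and k: "k \<in> B" and z: "z = h \<otimes> k"
      unfolding set_mult_def by blast
    have "z = k \<otimes> h" using z h k that m_comm by (simp add: subset_iff)
    then show "z \<in> B <#> A" unfolding set_mult_def using h k by blast
  qed
  have "X <#> Y = Y <#> X" using sub[OF Xc Yc] sub[OF Yc Xc] by (rule equalityI)
  then show ?thesis unfolding cq_def by (simp add: Int_commute)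
qed

lemma (in comm_group) cq_triangle:
  assumes fin: "finite (carrier G)" and X: "subgroup X G" and Y: "subgroup Y G" and Z: "subgroup Z G"
  shows "cq G X Z \<le> cq G X Y * cq G Y Z"
proof -
  have Yc: "Y \<subseteq> carrier G" using Y subgroup.subset by auto
  have fY: "finite Y" using Yc fin finite_subset by auto
  have Xc: "X \<subseteq> carrier G" using X subgroup.subset by auto
  have fX: "finite X" using Xc fin finite_subset by auto
  define p where "p = card (X \<inter> Y)"
  define q where "q = card (Y \<inter> Z)"
  define r where "r = card (X \<inter> Z)"
  define a where "a = card X"
  define b where "b = card Y"
  define c where "c = card Z"
  have h1: "cq G X Z * r * r = a * c" using cq_facts(3)[OF fin X Z] unfolding r_def a_def c_def .
  have h2: "cq G X Y * p * p = a * b" using cq_facts(3)[OF fin X Y] unfolding p_def a_def b_def .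
  have h3: "cq G Y Z * q * q = b * c" using cq_facts(3)[OF fin Y Z] unfolding q_def b_def c_def .
  have sXY: "subgroup (X \<inter> Y) G" and sYZ: "subgroup (Y \<inter> Z) G"
    using X Y Z by (simp_all add: subgroups_Inter_pair)
  have cm: "card ((X \<inter> Y) <#> (Y \<inter> Z)) * card ((X \<inter> Y) \<inter> (Y \<inter> Z)) = p * q"
    using card_set_mult[OF fin sXY sYZ] unfolding p_def q_def .
  have s1: "(X \<inter> Y) <#> (Y \<inter> Z) \<subseteq> Y"
  proof
    fix z assume "z \<in> (X \<inter> Y) <#> (Y \<inter> Z)"
    then obtain h k where h: "h \<in> Y" and k: "k \<in> Y" and z: "z = h \<otimes> k"
      unfolding set_mult_def by blast
    show "z \<in> Y" using subgroup.m_closed[OF Y h k] z by simp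
  qed
  have c1: "card ((X \<inter> Y) <#> (Y \<inter> Z)) \<le> b" unfolding b_def using card_mono[OF fY s1] .
  have c2: "card ((X \<inter> Y) \<inter> (Y \<inter> Z)) \<le> r" unfolding r_def
    by (rule card_mono) (use fX in auto)
  have h4: "p * q \<le> b * r" using mult_le_mono[OF c1 c2] cm by simp
  have one: "\<one> \<in> X" "\<one> \<in> Y" "\<one> \<in> Z" using X Y Z subgroup.one_closed by auto
  have pp: "p > 0" unfolding p_def using fX one by (auto simp: card_gt_0_iff)
  have qp: "q > 0" unfolding q_def using fY one by (auto simp: card_gt_0_iff)
  have rp: "r > 0" unfolding r_def using fX one by (auto simp: card_gt_0_iff)
  define N where "N = r * r * (p * q) * (p * q)"
  have Np: "N > 0" unfolding N_def using pp qp rp by simp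
  have "cq G X Z * N = (cq G X Z * r * r) * ((p * q) * (p * q))" unfolding N_def by (simp add: ac_simps)
  also have "\<dots> = a * c * ((p * q) * (p * q))" unfolding h1 ..
  also have "\<dots> \<le> a * c * ((b * r) * (b * r))" using mult_le_mono[OF h4 h4] by (intro mult_le_mono2)
  also have "\<dots> = (a * b) * (b * c) * (r * r)" by (simp add: ac_simps)
  also have "\<dots> = (cq G X Y * p * p) * (cq G Y Z * q * q) * (r * r)" unfolding h2 h3 ..
  also have "\<dots> = (cq G X Y * cq G Y Z) * N" unfolding N_def by (simp add: ac_simps)
  finally show ?thesis using Np by simp
qed


definition addsub :: "mpoly set \<Rightarrow> bool" where
  "addsub S \<longleftrightarrow> 0 \<in> S \<and> (\<forall>x\<in>S. \<forall>y\<in>S. x + y \<in> S) \<and> (\<forall>x\<in>S. - x \<in> S)"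

lemma addsub_sum:
  assumes "addsub S" and "\<And>x. x \<in> A \<Longrightarrow> f x \<in> S"
  shows "sum f A \<in> S"
proof (cases "finite A")
  case True
  then show ?thesis using assms(2)
    by (induction A rule: finite_induct) (use assms(1) in \<open>auto simp: addsub_def\<close>)
next
  case False
  then show ?thesis using assms(1) by (simp add: addsub_def)
qed

lemma keys_uminus_mp: "Poly_Mapping.keys (- (p::mpoly)) = Poly_Mapping.keys p"
  by (auto simp: in_keys_iff)

lemma Pn_addsub: "addsub (Pn n)"
proof -
  have "Poly_Mapping.keys (x + y) \<subseteq> Poly_Mapping.keys x \<union> Poly_Mapping.keys y" for x y :: mpoly
    by (rule keys_add)
  then show ?thesis unfolding addsub_def Pn_def using keys_uminus_mp by fastforce
qed

lemma Pn_mult: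
  assumes "p \<in> Pn n" "q \<in> Pn n" shows "p * q \<in> Pn n"
  unfolding Pn_def mem_Collect_eq
proof (intro ballI)
  fix x assume "x \<in> Poly_Mapping.keys (p * q)"
  then obtain a b where x: "x = a + b" and a: "a \<in> Poly_Mapping.keys p" and b: "b \<in> Poly_Mapping.keys q"
    using keys_mult[of p q] by blast
  have "Poly_Mapping.keys a \<subseteq> {1..n}" "Poly_Mapping.keys b \<subseteq> {1..n}"
    using a b assms unfolding Pn_def by auto
  then show "Poly_Mapping.keys x \<subseteq> {1..n}" using x keys_add[of a b] by blast
qed

lemma Pn_one: "1 \<in> Pn n"
  unfolding Pn_def by simp

lemma Pn_prod:
  assumes "\<And>x. x \<in> A \<Longrightarrow> f x \<in> Pn n" shows "prod f A \<in> Pn n"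
proof (cases "finite A")
  case True
  then show ?thesis using assms
    by (induction A rule: finite_induct) (auto simp: Pn_one Pn_mult)
next
  case False
  then show ?thesis by (simp add: Pn_one)
qed

lemma monom_Pn: "Poly_Mapping.keys a \<subseteq> {1..n} \<Longrightarrow> monom a \<in> Pn n"
  unfolding Pn_def monom_def by simp

lemma Xv_Pn: "i \<in> {1..n} \<Longrightarrow> Xv i \<in> Pn n"
  unfolding Pn_def Xv_def by simp

definition genI :: "nat \<Rightarrow> 'x set \<Rightarrow> ('x \<Rightarrow> mpoly) \<Rightarrow> mpoly set" where
  "genI n S g = {\<Sum>e\<in>S. c e * g e | c. \<forall>e. c e \<in> Pn n}"

lemma edge_ideal_genI: "edge_ideal n Q = genI n Q (\<lambda>e. \<Prod>i\<in>e. Xv i)"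
  unfolding edge_ideal_def genI_def ..

lemma deg_ideal_genI: "deg_ideal n m = genI n (monos_deg n m) monom"
  unfolding deg_ideal_def genI_def ..

lemma genI_addsub: "addsub (genI n S g)"
  unfolding addsub_def
proof (intro conjI ballI)
  show "0 \<in> genI n S g" unfolding genI_def
    using addsub_def Pn_addsub by (auto intro!: exI[where x="\<lambda>_. 0"])
next
  fix x y assume "x \<in> genI n S g" "y \<in> genI n S g"
  then obtain c d where x: "x = (\<Sum>e\<in>S. c e * g e)" and c: "\<forall>e. c e \<in> Pn n"
    and y: "y = (\<Sum>e\<in>S. d e * g e)" and d: "\<forall>e. d e \<in> Pn n"
    unfolding genI_def by blast
  have A: "x + y = (\<Sum>e\<in>S. (c e + d e) * g e)" unfolding x y by (simp add: sum.distrib distrib_right)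
  have B: "\<forall>e. c e + d e \<in> Pn n" using c d Pn_addsub unfolding addsub_def by blast
  show "x + y \<in> genI n S g" unfolding genI_def mem_Collect_eq
    by (rule exI[where x="\<lambda>e. c e + d e"]) (use A B in simp)
next
  fix x assume "x \<in> genI n S g"
  then obtain c where x: "x = (\<Sum>e\<in>S. c e * g e)" and c: "\<forall>e. c e \<in> Pn n"
    unfolding genI_def by blast
  have A: "- x = (\<Sum>e\<in>S. (- c e) * g e)" unfolding x by (simp add: sum_negf)
  have B: "\<forall>e. - c e \<in> Pn n" using c Pn_addsub unfolding addsub_def by blast
  show "- x \<in> genI n S g" unfolding genI_def mem_Collect_eq
    by (rule exI[where x="\<lambda>e. - c e"]) (use A B in simp)
qed

lemma genI_Pn:
  assumes "\<And>e. e \<in> S \<Longrightarrow> g e \<in> Pn n" shows "genI n S g \<subseteq> Pn n"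
proof
  fix x assume "x \<in> genI n S g"
  then obtain c where x: "x = (\<Sum>e\<in>S. c e * g e)" and c: "\<forall>e. c e \<in> Pn n"
    unfolding genI_def by blast
  show "x \<in> Pn n" unfolding x
    by (rule addsub_sum[OF Pn_addsub]) (use c assms Pn_mult in blast)
qed

lemma genI_gen_mult:
  assumes "finite S" "e \<in> S" "x \<in> Pn n" shows "x * g e \<in> genI n S g"
proof -
  let ?c = "\<lambda>e'. if e' = e then x else 0 :: mpoly"
  have "(\<Sum>e'\<in>S. ?c e' * g e') = (\<Sum>e'\<in>S. if e' = e then x * g e' else 0)"
    by (rule sum.cong) auto
  also have "\<dots> = x * g e" using assms by simp
  finally have A: "x * g e = (\<Sum>e'\<in>S. ?c e' * g e')" ..
  have B: "\<forall>e'. ?c e' \<in> Pn n" using assms(3) Pn_addsub unfolding addsub_def by auto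
  show ?thesis unfolding genI_def mem_Collect_eq
    by (rule exI[where x="?c"]) (use A B in simp)
qed

lemma genI_gen:
  assumes "finite S" "e \<in> S" shows "g e \<in> genI n S g"
  using genI_gen_mult[OF assms Pn_one] by simp

definition cst :: "mpoly set \<Rightarrow> mpoly \<Rightarrow> mpoly set" where
  "cst J p = (\<lambda>q. p + q) ` J"

lemma pi_m_cst: "pi_m n m p = cst (deg_ideal n m) p"
  unfolding pi_m_def cst_def ..

lemma cst_eq_iff:
  assumes J: "addsub J" shows "cst J p = cst J q \<longleftrightarrow> p - q \<in> J"
proof
  assume e: "cst J p = cst J q"
  have "p + 0 \<in> cst J p" unfolding cst_def using J by (auto simp: addsub_def)
  then have "p \<in> cst J q" using e by simp
  then obtain j where "j \<in> J" "p = q + j" unfolding cst_def by blast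
  then show "p - q \<in> J" by simp
next
  assume d: "p - q \<in> J"
  have 1: "cst J p \<subseteq> cst J q" if "p - q \<in> J" for p q
  proof
    fix x assume "x \<in> cst J p"
    then obtain j where j: "j \<in> J" "x = p + j" unfolding cst_def by blast
    have "(p - q) + j \<in> J" using J j that by (simp add: addsub_def)
    moreover have "x = q + ((p - q) + j)" using j by simp
    ultimately show "x \<in> cst J q" unfolding cst_def by blast
  qed
  have "q - p \<in> J" using d J unfolding addsub_def by (metis minus_diff_eq)
  then show "cst J p = cst J q" using 1 d by blast
qed

lemma radd_cst:
  assumes J: "addsub J" shows "radd (cst J p) (cst J q) = cst J (p + q)"
proof
  show "radd (cst J p) (cst J q) \<subseteq> cst J (p + q)"
  proof
    fix z assume "z \<in> radd (cst J p) (cst J q)"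
    then obtain j k where j: "j \<in> J" and k: "k \<in> J" and z: "z = (p + j) + (q + k)"
      unfolding radd_def cst_def by blast
    have "j + k \<in> J" using J j k by (simp add: addsub_def)
    moreover have "z = (p + q) + (j + k)" using z by (simp add: ac_simps)
    ultimately show "z \<in> cst J (p + q)" unfolding cst_def by blast
  qed
  show "cst J (p + q) \<subseteq> radd (cst J p) (cst J q)"
  proof
    fix z assume "z \<in> cst J (p + q)"
    then obtain j where j: "j \<in> J" and z: "z = (p + q) + j" unfolding cst_def by blast
    have "p + j \<in> cst J p" unfolding cst_def using j by blast
    moreover have "q + 0 \<in> cst J q" unfolding cst_def using J by (auto simp: addsub_def)
    moreover have "z = (p + j) + (q + 0)" using z by (simp add: ac_simps)
    ultimately show "z \<in> radd (cst J p) (cst J q)" unfolding radd_def by blast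
  qed
qed

lemma cst_zero: "cst J 0 = J"
  unfolding cst_def by simp

definition Gr :: "mpoly set \<Rightarrow> mpoly set \<Rightarrow> mpoly set monoid" where
  "Gr J P = \<lparr>carrier = cst J ` P, mult = radd, one = J\<rparr>"

lemma Gr_comm_group:
  assumes J: "addsub J" and P: "addsub P" and JP: "J \<subseteq> P"
  shows "comm_group (Gr J P)"
proof (rule comm_groupI)
  have Pc: "0 \<in> P" "\<And>x y. x \<in> P \<Longrightarrow> y \<in> P \<Longrightarrow> x + y \<in> P" "\<And>x. x \<in> P \<Longrightarrow> - x \<in> P"
    using P unfolding addsub_def by auto
  fix x y z
  show "x \<in> carrier (Gr J P) \<Longrightarrow> y \<in> carrier (Gr J P) \<Longrightarrow> x \<otimes>\<^bsub>Gr J P\<^esub> y \<in> carrier (Gr J P)"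
    unfolding Gr_def using radd_cst[OF J] Pc by auto
  show "\<one>\<^bsub>Gr J P\<^esub> \<in> carrier (Gr J P)"
    unfolding Gr_def using cst_zero[of J] Pc by (simp add: image_iff) (metis)
  show "x \<in> carrier (Gr J P) \<Longrightarrow> y \<in> carrier (Gr J P) \<Longrightarrow> z \<in> carrier (Gr J P) \<Longrightarrow>
      x \<otimes>\<^bsub>Gr J P\<^esub> y \<otimes>\<^bsub>Gr J P\<^esub> z = x \<otimes>\<^bsub>Gr J P\<^esub> (y \<otimes>\<^bsub>Gr J P\<^esub> z)"
    unfolding Gr_def using radd_cst[OF J] by (auto simp: ac_simps)
  show "x \<in> carrier (Gr J P) \<Longrightarrow> y \<in> carrier (Gr J P) \<Longrightarrow> x \<otimes>\<^bsub>Gr J P\<^esub> y = y \<otimes>\<^bsub>Gr J P\<^esub> x"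
    unfolding Gr_def using radd_cst[OF J] by (auto simp: ac_simps)
  show "x \<in> carrier (Gr J P) \<Longrightarrow> \<one>\<^bsub>Gr J P\<^esub> \<otimes>\<^bsub>Gr J P\<^esub> x = x"
  proof -
    assume "x \<in> carrier (Gr J P)"
    then obtain p where x: "x = cst J p" unfolding Gr_def by auto
    have "radd (cst J 0) (cst J p) = cst J p" using radd_cst[OF J] by simp
    then show ?thesis unfolding Gr_def x by (simp add: cst_zero)
  qed
  show "x \<in> carrier (Gr J P) \<Longrightarrow> \<exists>y\<in>carrier (Gr J P). y \<otimes>\<^bsub>Gr J P\<^esub> x = \<one>\<^bsub>Gr J P\<^esub>"
  proof -
    assume "x \<in> carrier (Gr J P)"
    then obtain p where x: "x = cst J p" and p: "p \<in> P" unfolding Gr_def by auto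
    have "radd (cst J (- p)) (cst J p) = J" using radd_cst[OF J] cst_zero[of J] by simp
    moreover have "cst J (- p) \<in> carrier (Gr J P)" unfolding Gr_def using Pc p by simp
    ultimately show ?thesis unfolding x by (intro bexI[where x="cst J (- p)"]) (simp_all add: Gr_def)
  qed
qed

lemma Gr_subgroup:
  assumes J: "addsub J" and P: "addsub P" and JP: "J \<subseteq> P" and I: "addsub I" and IP: "I \<subseteq> P"
  shows "subgroup (cst J ` I) (Gr J P)"
proof -
  interpret comm_group "Gr J P" using Gr_comm_group[OF J P JP] .
  show ?thesis
  proof (rule subgroupI)
    show "cst J ` I \<subseteq> carrier (Gr J P)" using IP unfolding Gr_def by auto
    show "cst J ` I \<noteq> {}" using I unfolding addsub_def by auto
  next
    fix a assume "a \<in> cst J ` I"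
    then obtain p where a: "a = cst J p" and p: "p \<in> I" by auto
    have pP: "p \<in> P" using p IP by auto
    have "inv\<^bsub>Gr J P\<^esub> a = cst J (- p)"
    proof (rule inv_equality)
      show "cst J (- p) \<otimes>\<^bsub>Gr J P\<^esub> a = \<one>\<^bsub>Gr J P\<^esub>"
        unfolding a Gr_def using radd_cst[OF J] cst_zero[of J] by simp
      show "a \<in> carrier (Gr J P)" unfolding a Gr_def using pP by simp
      show "cst J (- p) \<in> carrier (Gr J P)" unfolding Gr_def using pP P by (simp add: addsub_def)
    qed
    then show "inv\<^bsub>Gr J P\<^esub> a \<in> cst J ` I" using p I by (simp add: addsub_def)
  next
    fix a b assume "a \<in> cst J ` I" "b \<in> cst J ` I"
    then obtain p q where a: "a = cst J p" and p: "p \<in> I" and b: "b = cst J q" and q: "q \<in> I" by auto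
    show "a \<otimes>\<^bsub>Gr J P\<^esub> b \<in> cst J ` I"
      unfolding a b Gr_def using radd_cst[OF J] p q I by (simp add: addsub_def)
  qed
qed


definition tdeg :: "nat \<Rightarrow> (nat \<Rightarrow>\<^sub>0 nat) \<Rightarrow> nat" where
  "tdeg n a = (\<Sum>k\<in>{1..n}. Poly_Mapping.lookup a k)"

lemma finite_bmon: "finite {a::nat \<Rightarrow>\<^sub>0 nat. Poly_Mapping.keys a \<subseteq> {1..n} \<and> (\<forall>k. Poly_Mapping.lookup a k \<le> m)}"
  (is "finite ?B")
proof -
  have "Poly_Mapping.lookup ` ?B \<subseteq> {f. \<forall>x. (x \<in> {1..n} \<longrightarrow> f x \<in> {0..m}) \<and> (x \<notin> {1..n} \<longrightarrow> f x = 0)}"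
    by (auto simp: in_keys_iff subset_iff)
  moreover have "finite {f::nat\<Rightarrow>nat. \<forall>x. (x \<in> {1..n} \<longrightarrow> f x \<in> {0..m}) \<and> (x \<notin> {1..n} \<longrightarrow> f x = 0)}"
    by (rule finite_set_of_finite_funs) auto
  ultimately have "finite (Poly_Mapping.lookup ` ?B)" by (rule finite_subset)
  moreover have "inj_on Poly_Mapping.lookup ?B" by (simp add: inj_on_def)
  ultimately show ?thesis by (rule finite_imageD)
qed

lemma lookup_le_tdeg:
  assumes "Poly_Mapping.keys a \<subseteq> {1..n}" shows "Poly_Mapping.lookup a k \<le> tdeg n a"
proof (cases "k \<in> {1..n}")
  case True
  then show ?thesis unfolding tdeg_def by (intro member_le_sum) auto
next
  case False
  then have "k \<notin> Poly_Mapping.keys a" using assms by auto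
  then show ?thesis by (simp add: in_keys_iff)
qed

lemma finite_low: "finite {a. Poly_Mapping.keys a \<subseteq> {1..n} \<and> tdeg n a \<le> m}"
proof (rule finite_subset[OF _ finite_bmon[of n m]])
  show "{a. Poly_Mapping.keys a \<subseteq> {1..n} \<and> tdeg n a \<le> m}
    \<subseteq> {a. Poly_Mapping.keys a \<subseteq> {1..n} \<and> (\<forall>k. Poly_Mapping.lookup a k \<le> m)}"
    using lookup_le_tdeg le_trans by blast
qed

lemma finite_monos_deg: "finite (monos_deg n m)"
  by (rule finite_subset[OF _ finite_low[of n m]]) (auto simp: monos_deg_def tdeg_def)

lemma exists_sub:
  assumes "m' \<le> tdeg n a"
  shows "\<exists>b. (\<forall>k. Poly_Mapping.lookup b k \<le> Poly_Mapping.lookup a k) \<and> tdeg n b = m'"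
  using assms
proof (induction m')
  case 0
  show ?case by (intro exI[where x=0]) (simp add: tdeg_def)
next
  case (Suc m')
  then obtain b where b: "\<forall>k. Poly_Mapping.lookup b k \<le> Poly_Mapping.lookup a k" and tb: "tdeg n b = m'"
    by auto
  have "\<exists>k\<in>{1..n}. Poly_Mapping.lookup b k < Poly_Mapping.lookup a k"
  proof (rule ccontr)
    assume "\<not> ?thesis"
    then have "tdeg n a \<le> tdeg n b" unfolding tdeg_def by (intro sum_mono) (auto simp: not_less)
    then show False using tb Suc.prems by simp
  qed
  then obtain k where k: "k \<in> {1..n}" and lt: "Poly_Mapping.lookup b k < Poly_Mapping.lookup a k" by blast
  let ?b = "b + Poly_Mapping.single k 1"
  have "\<forall>k'. Poly_Mapping.lookup ?b k' \<le> Poly_Mapping.lookup a k'"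
    using b lt by (auto simp: lookup_add lookup_single when_def Suc_le_eq)
  moreover have "tdeg n ?b = Suc m'"
  proof -
    have "tdeg n ?b = tdeg n b + (\<Sum>k'\<in>{1..n}. Poly_Mapping.lookup (Poly_Mapping.single k 1) k')"
      unfolding tdeg_def by (simp add: lookup_add sum.distrib)
    also have "(\<Sum>k'\<in>{1..n}. Poly_Mapping.lookup (Poly_Mapping.single k (1::nat)) k') = 1"
      using k by (simp add: lookup_single when_def)
    finally show ?thesis using tb by simp
  qed
  ultimately show ?case by blast
qed

lemma monom_in_deg_ideal:
  assumes ka: "Poly_Mapping.keys a \<subseteq> {1..n}" and da: "m \<le> tdeg n a"
  shows "monom a \<in> deg_ideal n m"
proof -
  obtain b where b: "\<forall>k. Poly_Mapping.lookup b k \<le> Poly_Mapping.lookup a k" and tb: "tdeg n b = m"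
    using exists_sub[OF da] by blast
  have kb: "Poly_Mapping.keys b \<subseteq> Poly_Mapping.keys a"
    using b by (auto simp: in_keys_iff) (meson less_le_trans)
  have bm: "b \<in> monos_deg n m" unfolding monos_deg_def using kb ka tb by (auto simp: tdeg_def)
  have ab: "(a - b) + b = a"
    by (rule poly_mapping_eqI) (use b in \<open>simp add: lookup_add lookup_minus\<close>)
  have kab: "Poly_Mapping.keys (a - b) \<subseteq> {1..n}"
    using ka by (auto simp: in_keys_iff lookup_minus)
  have "monom (a - b) * monom b = monom a"
    unfolding monom_def mult_single ab by simp
  moreover have "monom (a - b) \<in> Pn n" using monom_Pn[OF kab] .
  ultimately show ?thesis
    using genI_gen_mult[OF finite_monos_deg bm, of "monom (a - b)" n monom] unfolding deg_ideal_genI by simp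
qed


lemma sum_monoms: "(p::mpoly) = (\<Sum>a\<in>Poly_Mapping.keys p. monom a)"
proof (rule poly_mapping_eqI)
  fix k
  have "Poly_Mapping.lookup (\<Sum>a\<in>Poly_Mapping.keys p. monom a) k
      = (\<Sum>a\<in>Poly_Mapping.keys p. (if a = k then 1 else 0))"
    unfolding lookup_sum monom_def by (intro sum.cong) (auto simp: lookup_single when_def)
  also have "\<dots> = (if k \<in> Poly_Mapping.keys p then 1 else 0)" by simp
  also have "\<dots> = Poly_Mapping.lookup p k" by (auto simp: in_keys_iff)
  finally show "Poly_Mapping.lookup p k = Poly_Mapping.lookup (\<Sum>a\<in>Poly_Mapping.keys p. monom a) k" ..
qed

lemma deg_ideal_addsub: "addsub (deg_ideal n m)"
  unfolding deg_ideal_genI by (rule genI_addsub)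

lemma deg_ideal_Pn: "deg_ideal n m \<subseteq> Pn n"
  unfolding deg_ideal_genI
proof (rule genI_Pn)
  fix e assume "e \<in> monos_deg n m"
  then have "Poly_Mapping.keys e \<subseteq> {1..n}" unfolding monos_deg_def by blast
  then show "monom e \<in> Pn n" by (rule monom_Pn)
qed

lemma finite_quot: "finite (cst (deg_ideal n m) ` Pn n)"
proof -
  let ?J = "deg_ideal n m"
  define L where "L = {a. Poly_Mapping.keys a \<subseteq> {1..n} \<and> tdeg n a \<le> m}"
  have fL: "finite L" unfolding L_def by (rule finite_low)
  have "cst ?J ` Pn n \<subseteq> (\<lambda>S. cst ?J (\<Sum>a\<in>S. monom a)) ` Pow L"
  proof
    fix x assume "x \<in> cst ?J ` Pn n"
    then obtain p where x: "x = cst ?J p" and p: "p \<in> Pn n" by auto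
    let ?K = "Poly_Mapping.keys p"
    have fK: "finite ?K" by simp
    have split: "(\<Sum>a\<in>?K. monom a) = (\<Sum>a\<in>?K \<inter> L. monom a) + (\<Sum>a\<in>?K - L. monom a)"
      using sum.Int_Diff[OF fK] .
    have hi: "(\<Sum>a\<in>?K - L. monom a) \<in> ?J"
    proof (rule addsub_sum[OF deg_ideal_addsub])
      fix a assume a: "a \<in> ?K - L"
      have ka: "Poly_Mapping.keys a \<subseteq> {1..n}" using a p unfolding Pn_def by auto
      then have "m \<le> tdeg n a" using a unfolding L_def by auto
      then show "monom a \<in> ?J" using monom_in_deg_ideal[OF ka] by simp
    qed
    have "p - (\<Sum>a\<in>?K \<inter> L. monom a) = (\<Sum>a\<in>?K - L. monom a)"
      using split sum_monoms[of p] by (metis add_diff_cancel_left')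
    then have "cst ?J p = cst ?J (\<Sum>a\<in>?K \<inter> L. monom a)"
      using cst_eq_iff[OF deg_ideal_addsub] hi by simp
    then show "x \<in> (\<lambda>S. cst ?J (\<Sum>a\<in>S. monom a)) ` Pow L" unfolding x by blast
  qed
  moreover have "finite ((\<lambda>S. cst ?J (\<Sum>a\<in>S. monom a)) ` Pow L)" using fL by simp
  ultimately show ?thesis by (rule finite_subset)
qed


definition goodk :: "nat \<Rightarrow> nat \<Rightarrow> nat set set \<Rightarrow> (nat \<Rightarrow>\<^sub>0 nat) \<Rightarrow> bool" where
  "goodk n m Q a \<longleftrightarrow> (\<exists>e\<in>Q. \<forall>k\<in>e. 0 < Poly_Mapping.lookup a k) \<or> m \<le> tdeg n a"

definition good :: "nat \<Rightarrow> nat \<Rightarrow> nat set set \<Rightarrow> mpoly \<Rightarrow> bool" where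
  "good n m Q f \<longleftrightarrow> (\<forall>a\<in>Poly_Mapping.keys f. goodk n m Q a)"

lemma tdeg_add: "tdeg n (u + v) = tdeg n u + tdeg n v"
  unfolding tdeg_def by (simp add: lookup_add sum.distrib)

lemma goodk_mono:
  assumes "goodk n m Q v" shows "goodk n m Q (u + v)"
proof -
  have "0 < Poly_Mapping.lookup (u + v) k" if "0 < Poly_Mapping.lookup v k" for k
    using that by (simp add: lookup_add)
  moreover have "tdeg n v \<le> tdeg n (u + v)" by (simp add: tdeg_add)
  ultimately show ?thesis using assms unfolding goodk_def by (meson le_trans)
qed

lemma good_add: "good n m Q f \<Longrightarrow> good n m Q g \<Longrightarrow> good n m Q (f + g)"
  unfolding good_def using keys_add[of f g] by blast

lemma good_zero: "good n m Q 0"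
  unfolding good_def by simp

lemma good_sum: "(\<And>x. x \<in> A \<Longrightarrow> good n m Q (f x)) \<Longrightarrow> good n m Q (sum f A)"
proof (induction A rule: infinite_finite_induct)
  case (infinite A)
  then show ?case by (simp add: good_zero)
next
  case empty
  then show ?case by (simp add: good_zero)
next
  case (insert x F)
  then show ?case by (simp add: good_add)
qed

lemma good_mult: "good n m Q g \<Longrightarrow> good n m Q (c * g)"
  unfolding good_def
proof (intro ballI)
  fix x assume g: "\<forall>a\<in>Poly_Mapping.keys g. goodk n m Q a" and x: "x \<in> Poly_Mapping.keys (c * g)"
  then obtain u v where "x = u + v" "v \<in> Poly_Mapping.keys g"
    using keys_mult[of c g] by blast
  then show "goodk n m Q x" using g goodk_mono by blast
qed

lemma good_genI:
  assumes "\<And>e. e \<in> S \<Longrightarrow> good n m Q (g e)" and "x \<in> genI n S g"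
  shows "good n m Q x"
proof -
  obtain c where x: "x = (\<Sum>e\<in>S. c e * g e)" using assms(2) unfolding genI_def by blast
  show ?thesis unfolding x by (rule good_sum) (use assms(1) good_mult in blast)
qed

lemma keys_prod_Xv:
  assumes "finite e"
  shows "\<forall>a\<in>Poly_Mapping.keys (\<Prod>k\<in>e. Xv k). \<forall>k\<in>e. 0 < Poly_Mapping.lookup a k"
  using assms
proof (induction e rule: finite_induct)
  case empty
  then show ?case by simp
next
  case (insert k0 F)
  show ?case
  proof (intro ballI)
    fix a k assume a: "a \<in> Poly_Mapping.keys (\<Prod>k\<in>insert k0 F. Xv k)" and k: "k \<in> insert k0 F"
    have "a \<in> Poly_Mapping.keys (Xv k0 * (\<Prod>k\<in>F. Xv k))" using a insert by simp
    then obtain u v where a: "a = u + v" and u: "u \<in> Poly_Mapping.keys (Xv k0)"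
      and v: "v \<in> Poly_Mapping.keys (\<Prod>k\<in>F. Xv k)"
      using keys_mult[of "Xv k0" "\<Prod>k\<in>F. Xv k"] by blast
    have u0: "u = Poly_Mapping.single k0 1" using u unfolding Xv_def by simp
    show "0 < Poly_Mapping.lookup a k"
    proof (cases "k = k0")
      case True
      then show ?thesis unfolding a u0 by (simp add: lookup_add)
    next
      case False
      then have "k \<in> F" using k by simp
      then have "0 < Poly_Mapping.lookup v k" using insert.IH v by blast
      then show ?thesis unfolding a by (simp add: lookup_add)
    qed
  qed
qed

lemma cs_finite: "Q \<in> contact_structures n \<Longrightarrow> finite Q"
proof -
  assume "Q \<in> contact_structures n"
  then have "\<forall>e\<in>Q. \<exists>i j. e = {i, j} \<and> i \<noteq> j \<and> i \<in> {1..n} \<and> j \<in> {1..n}"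
    unfolding contact_structures_def mem_Collect_eq by (rule conjunct1)
  then have "Q \<subseteq> Pow {1..n}" by fastforce
  then show "finite Q" by (rule finite_subset) simp
qed

lemma cs_edge:
  assumes "Q \<in> contact_structures n" "e \<in> Q"
  obtains i j where "e = {i, j}" "i \<noteq> j" "i \<in> {1..n}" "j \<in> {1..n}"
proof -
  have "\<forall>e\<in>Q. \<exists>i j. e = {i, j} \<and> i \<noteq> j \<and> i \<in> {1..n} \<and> j \<in> {1..n}"
    using assms(1) unfolding contact_structures_def mem_Collect_eq by (rule conjunct1)
  then have "\<exists>i j. e = {i, j} \<and> i \<noteq> j \<and> i \<in> {1..n} \<and> j \<in> {1..n}" using assms(2) by (rule bspec)
  then obtain i j where "e = {i, j}" "i \<noteq> j" "i \<in> {1..n}" "j \<in> {1..n}" by (elim exE conjE)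
  then show ?thesis by (rule that)
qed

lemma edge_ideal_good:
  assumes Q: "Q \<in> contact_structures n" and x: "x \<in> edge_ideal n Q"
  shows "good n m Q x"
proof (rule good_genI[OF _ x[unfolded edge_ideal_genI]])
  fix e assume e: "e \<in> Q"
  obtain i j where "e = {i, j}" "i \<noteq> j" "i \<in> {1..n}" "j \<in> {1..n}" by (rule cs_edge[OF Q e])
  then have fe: "finite e" by simp
  show "good n m Q (\<Prod>k\<in>e. Xv k)" unfolding good_def goodk_def
    using keys_prod_Xv[OF fe] e by blast
qed

lemma deg_ideal_good:
  assumes x: "x \<in> deg_ideal n m"
  shows "good n m Q x"
proof (rule good_genI[OF _ x[unfolded deg_ideal_genI]])
  fix b assume b: "b \<in> monos_deg n m"
  then have "tdeg n b = m" unfolding monos_deg_def tdeg_def by simp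
  then show "good n m Q (monom b)" unfolding good_def goodk_def monom_def by simp
qed

lemma edge_ideal_addsub: "addsub (edge_ideal n Q)"
  unfolding edge_ideal_genI by (rule genI_addsub)

lemma edge_ideal_Pn:
  assumes Q: "Q \<in> contact_structures n" shows "edge_ideal n Q \<subseteq> Pn n"
  unfolding edge_ideal_genI
proof (rule genI_Pn)
  fix e assume e: "e \<in> Q"
  obtain i j where "e = {i, j}" "i \<noteq> j" "i \<in> {1..n}" "j \<in> {1..n}" by (rule cs_edge[OF Q e])
  then show "(\<Prod>k\<in>e. Xv k) \<in> Pn n" by (intro Pn_prod Xv_Pn) auto
qed

lemma pi_img_sub:
  assumes Q1: "Q1 \<in> contact_structures n" and Q2: "Q2 \<in> contact_structures n" and m: "m \<ge> 3"
    and sub: "pi_img n m (edge_ideal n Q1) \<subseteq> pi_img n m (edge_ideal n Q2)"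
  shows "Q1 \<subseteq> Q2"
proof
  fix e assume e: "e \<in> Q1"
  show "e \<in> Q2"
  proof (rule ccontr)
    assume ne: "e \<notin> Q2"
    obtain i j where eij: "e = {i, j}" and ij: "i \<noteq> j" and i: "i \<in> {1..n}" and j: "j \<in> {1..n}"
      by (rule cs_edge[OF Q1 e])
    define a0 where "a0 = Poly_Mapping.single i (1::nat) + Poly_Mapping.single j 1"
    define p where "p = Xv i * Xv j"
    have p1: "p = (\<Prod>k\<in>e. Xv k)" unfolding p_def eij using ij by simp
    have p2: "p = Poly_Mapping.single a0 1" unfolding p_def Xv_def a0_def mult_single by simp
    have "p \<in> edge_ideal n Q1" unfolding p1 edge_ideal_genI
      by (rule genI_gen[OF cs_finite[OF Q1] e])
    then have "pi_m n m p \<in> pi_img n m (edge_ideal n Q2)" using sub unfolding pi_img_def by blast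
    then obtain q where q: "q \<in> edge_ideal n Q2" and pq: "pi_m n m p = pi_m n m q"
      unfolding pi_img_def by blast
    have "p - q \<in> deg_ideal n m" using pq cst_eq_iff[OF deg_ideal_addsub] unfolding pi_m_cst by blast
    then have "good n m Q2 (q + (p - q))"
      using good_add edge_ideal_good[OF Q2 q] deg_ideal_good by blast
    then have "goodk n m Q2 a0" unfolding good_def p2[symmetric] by (simp add: p2)
    moreover have "\<not> (\<exists>e'\<in>Q2. \<forall>k\<in>e'. 0 < Poly_Mapping.lookup a0 k)"
    proof
      assume "\<exists>e'\<in>Q2. \<forall>k\<in>e'. 0 < Poly_Mapping.lookup a0 k"
      then obtain e' where e': "e' \<in> Q2" and pos: "\<forall>k\<in>e'. 0 < Poly_Mapping.lookup a0 k" by blast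
      obtain i' j' where e'ij: "e' = {i', j'}" and ij': "i' \<noteq> j'" "i' \<in> {1..n}" "j' \<in> {1..n}"
        by (rule cs_edge[OF Q2 e'])
      have "\<And>k. 0 < Poly_Mapping.lookup a0 k \<Longrightarrow> k = i \<or> k = j"
        unfolding a0_def by (auto simp: lookup_add lookup_single when_def split: if_splits)
      then have "i' \<in> {i, j}" "j' \<in> {i, j}" using pos e'ij by auto
      then have "e' = e" using e'ij eij ij' by auto
      then show False using e' ne by simp
    qed
    moreover have "tdeg n a0 \<le> 2"
    proof -
      have "tdeg n (Poly_Mapping.single k 1) \<le> 1" for k
        unfolding tdeg_def by (simp add: lookup_single when_def)
      then show ?thesis unfolding a0_def tdeg_add by (metis add_mono one_add_one)
    qed
    ultimately show False using m unfolding goodk_def by linarith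
  qed
qed


lemma dquot_cq:
  fixes n m :: nat and G
  assumes G_def: "G = Gr (deg_ideal n m) (Pn n)"
  shows "card (dquot n m Q1 Q2) = cq G (pi_img n m (edge_ideal n Q1)) (pi_img n m (edge_ideal n Q2))"
    and "dquot n m Q1 Q2 = cosq G (pi_img n m (edge_ideal n Q1) <#>\<^bsub>G\<^esub> pi_img n m (edge_ideal n Q2))
            (pi_img n m (edge_ideal n Q1) \<inter> pi_img n m (edge_ideal n Q2))"
proof -
  have m: "mult G = radd" unfolding G_def Gr_def by simp
  have sm: "A <#>\<^bsub>G\<^esub> B = subgroup_sum A B" for A B
    unfolding set_mult_def subgroup_sum_def m by blast
  show e: "dquot n m Q1 Q2 = cosq G (pi_img n m (edge_ideal n Q1) <#>\<^bsub>G\<^esub> pi_img n m (edge_ideal n Q2))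
            (pi_img n m (edge_ideal n Q1) \<inter> pi_img n m (edge_ideal n Q2))"
    unfolding dquot_def quot_group_def cosq_def sm m ..
  show "card (dquot n m Q1 Q2) = cq G (pi_img n m (edge_ideal n Q1)) (pi_img n m (edge_ideal n Q2))"
    unfolding cq_def e ..
qed

lemma pi_img_cst: "pi_img n m I = cst (deg_ideal n m) ` I"
  unfolding pi_img_def pi_m_cst ..

theorem mainTheorem3:
  fixes n m :: nat
  assumes "n \<ge> 3" and "m \<ge> 3"
  shows "(\<forall>Q1\<in>contact_structures n. \<forall>Q2\<in>contact_structures n.
            finite (dquot n m Q1 Q2))
       \<and> (\<forall>Q1\<in>contact_structures n. \<forall>Q2\<in>contact_structures n.
            dprime n m Q1 Q2 = 0 \<longleftrightarrow> Q1 = Q2)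
       \<and> (\<forall>Q1\<in>contact_structures n. \<forall>Q2\<in>contact_structures n.
            dprime n m Q1 Q2 = dprime n m Q2 Q1)
       \<and> (\<forall>Q1\<in>contact_structures n. \<forall>Q2\<in>contact_structures n. \<forall>Q3\<in>contact_structures n.
            dprime n m Q1 Q3 \<le> dprime n m Q1 Q2 + dprime n m Q2 Q3)"
proof -
  let ?J = "deg_ideal n m"
  let ?G = "Gr ?J (Pn n)"
  interpret G: comm_group ?G using Gr_comm_group[OF deg_ideal_addsub Pn_addsub deg_ideal_Pn] .
  have fin: "finite (carrier ?G)" unfolding Gr_def using finite_quot by simp
  let ?A = "\<lambda>Q. pi_img n m (edge_ideal n Q)"
  have sub: "subgroup (?A Q) ?G" if "Q \<in> contact_structures n" for Q
    unfolding pi_img_cst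
    by (rule Gr_subgroup[OF deg_ideal_addsub Pn_addsub deg_ideal_Pn edge_ideal_addsub edge_ideal_Pn[OF that]])
  have dp: "dprime n m Q1 Q2 = log 2 (real (cq ?G (?A Q1) (?A Q2)))" for Q1 Q2
    unfolding dprime_def dquot_cq(1)[OF refl] ..
  have pos: "real (cq ?G (?A Q1) (?A Q2)) > 0" if "Q1 \<in> contact_structures n" "Q2 \<in> contact_structures n" for Q1 Q2
    using G.cq_facts(4)[OF fin sub[OF that(1)] sub[OF that(2)]] by simp
  show ?thesis
  proof (intro conjI ballI)
    fix Q1 Q2 assume Q1: "Q1 \<in> contact_structures n" and Q2: "Q2 \<in> contact_structures n"
    show "finite (dquot n m Q1 Q2)" unfolding dquot_cq(2)[OF refl]
      by (rule G.cq_facts(1)[OF fin sub[OF Q1] sub[OF Q2]])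
    show "dprime n m Q1 Q2 = dprime n m Q2 Q1" unfolding dp
      using G.cq_sym[OF subgroup.subset[OF sub[OF Q1]] subgroup.subset[OF sub[OF Q2]]] by simp
    show "dprime n m Q1 Q2 = 0 \<longleftrightarrow> Q1 = Q2"
    proof
      assume "dprime n m Q1 Q2 = 0"
      then have "log 2 (real (cq ?G (?A Q1) (?A Q2))) \<le> log 2 1" unfolding dp by simp
      then have "real (cq ?G (?A Q1) (?A Q2)) \<le> 1" using pos[OF Q1 Q2] by simp
      then have c1: "cq ?G (?A Q1) (?A Q2) = 1" using G.cq_facts(4)[OF fin sub[OF Q1] sub[OF Q2]] by simp
      then have c2: "cq ?G (?A Q2) (?A Q1) = 1"
        using G.cq_sym[OF subgroup.subset[OF sub[OF Q1]] subgroup.subset[OF sub[OF Q2]]] by simp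
      have "?A Q1 \<subseteq> ?A Q2" by (rule G.cq_one_imp[OF fin sub[OF Q1] sub[OF Q2] c1])
      moreover have "?A Q2 \<subseteq> ?A Q1" by (rule G.cq_one_imp[OF fin sub[OF Q2] sub[OF Q1] c2])
      ultimately show "Q1 = Q2" using pi_img_sub[OF Q1 Q2 assms(2)] pi_img_sub[OF Q2 Q1 assms(2)] by blast
    next
      assume "Q1 = Q2"
      then show "dprime n m Q1 Q2 = 0" unfolding dp using G.cq_refl[OF sub[OF Q2]] by simp
    qed
  next
    fix Q1 Q2 Q3 assume Q1: "Q1 \<in> contact_structures n" and Q2: "Q2 \<in> contact_structures n"
      and Q3: "Q3 \<in> contact_structures n"
    have t: "cq ?G (?A Q1) (?A Q3) \<le> cq ?G (?A Q1) (?A Q2) * cq ?G (?A Q2) (?A Q3)"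
      by (rule G.cq_triangle[OF fin sub[OF Q1] sub[OF Q2] sub[OF Q3]])
    have "log 2 (real (cq ?G (?A Q1) (?A Q3))) \<le> log 2 (real (cq ?G (?A Q1) (?A Q2)) * real (cq ?G (?A Q2) (?A Q3)))"
      using t pos[OF Q1 Q3] pos[OF Q1 Q2] pos[OF Q2 Q3] by (simp flip: of_nat_mult)
    also have "\<dots> = log 2 (real (cq ?G (?A Q1) (?A Q2))) + log 2 (real (cq ?G (?A Q2) (?A Q3)))"
      using pos[OF Q1 Q2] pos[OF Q2 Q3] by (rule log_mult_pos)
    finally show "dprime n m Q1 Q3 \<le> dprime n m Q1 Q2 + dprime n m Q2 Q3" unfolding dp .
  qed
qed

end
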